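(* Let $\kappa,\gamma,\tau,\theta,f,s$ be strictly positive real constants, let $A = 2e^{-\gamma\tau}$, and let $\beta(Q) = f\,\dfrac{\theta^{s}}{\theta^{s}+Q^{s}}$ for $Q \ge 0$. Consider the delay differential equation $$Q'(t) = -\bigl(\kappa+\beta(Q(t))\bigr)Q(t) + A\,\beta(Q(t-\tau))\,Q(t-\tau).$$ If $Q(t)=\varphi(t)$ for $t\in[-\tau,0]$, where $\varphi\in C([-\tau,0],[0,\infty))$ (i.e. $\varphi$ is continuous and non-negative on $[-\tau,0]$), then this equation has a unique solution $Q(t)$ defined for all $t\ge 0$, and there exists some $M<\infty$ such that $Q(t)\in[0,M]$ for all $t\ge 0$.
   Context: This is the Burns–Tannock/Mackey model for the concentration $Q(t)$ of hematopoietic stem cells in the resting phase: $\kappa$ is the differentiation rate, $\gamma$ the apoptosis rate during proliferation, $\tau$ the cell-cycle duration (constant delay), $\beta$ the rate of entry into the cell cycle (a Hill function with maximal rate $f$, half-effect concentration $\theta$ and Hill coefficient $s$), and $A=2e^{-\gamma\tau}$ the amplification factor. A solution with initial history $\varphi$ means a continuous function $Q$ on $[-\tau,\infty)$ equal to $\varphi$ on $[-\tau,0]$ and satisfying the differential equation for $t>0$. *)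

theory Defs
  imports "HOL-Analysis.Analysis"
begin

text \<open>Rate of entry into the cell cycle (Hill function). The paper defines it for
  q \<ge> 0; we use |q| so that it is a total function on the reals, agreeing with
  the paper's beta on [0,\<infinity>).\<close>
definition hill_beta :: "real \<Rightarrow> real \<Rightarrow> real \<Rightarrow> real \<Rightarrow> real" where
  "hill_beta f \<theta> s q = f * (\<theta> powr s / (\<theta> powr s + \<bar>q\<bar> powr s))"

definition amp :: "real \<Rightarrow> real \<Rightarrow> real" where
  "amp \<gamma> \<tau> = 2 * exp (- \<gamma> * \<tau>)"

definition is_solution ::
  "real \<Rightarrow> real \<Rightarrow> real \<Rightarrow> real \<Rightarrow> real \<Rightarrow> real \<Rightarrow> (real \<Rightarrow> real) \<Rightarrow> (real \<Rightarrow> real) \<Rightarrow> bool" where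
  "is_solution \<kappa> \<gamma> \<tau> \<theta> f s \<phi> Q \<longleftrightarrow>
     continuous_on {-\<tau>..} Q \<and>
     (\<forall>t\<in>{-\<tau>..0}. Q t = \<phi> t) \<and>
     (\<forall>t>0. (Q has_real_derivative
          (- (\<kappa> + hill_beta f \<theta> s (Q t)) * Q t
           + amp \<gamma> \<tau> * hill_beta f \<theta> s (Q (t - \<tau>)) * Q (t - \<tau>))) (at t))"

end

theory Submission
  imports Defs
begin


lemma h_deriv:
  fixes c s z :: real assumes "c > 0" "z > 0"
  shows "((\<lambda>z. z / (c + z powr s)) has_real_derivative
     ((c + z powr s) - s * z powr s) / (c + z powr s)^2) (at z)"
proof -
  have p: "z powr s \<ge> 0" by simp
  have "((\<lambda>z. z / (c + z powr s)) has_real_derivative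
     (1 * (c + z powr s) - z * (0 + s * z powr (s - 1) * 1)) / (c + z powr s)^2) (at z)"
    using assms p add_pos_nonneg[OF assms(1) p]
    by (intro derivative_eq_intros DERIV_fun_powr) (auto simp: power2_eq_square)
  moreover have "z * z powr (s - 1) = z powr s"
    using assms by (simp add: powr_diff field_simps)
  ultimately show ?thesis by (simp add: algebra_simps)
qed

lemma h_deriv_bound:
  fixes c s z :: real assumes "c > 0" "z > 0" "s > 0"
  shows "\<bar>((c + z powr s) - s * z powr s) / (c + z powr s)^2\<bar> \<le> (1 + s) / c"
proof -
  let ?p = "z powr s"
  have p: "?p \<ge> 0" by simp
  have d: "c + ?p > 0" using assms p by linarith
  have "\<bar>(c + ?p) - s * ?p\<bar> \<le> (1 + s) * (c + ?p)"
    using assms p by (auto simp: abs_if algebra_simps intro: mult_left_mono)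
  hence "\<bar>((c + ?p) - s * ?p) / (c + ?p)^2\<bar> \<le> (1 + s) * (c + ?p) / (c + ?p)^2"
    using d by (simp add: abs_div divide_right_mono)
  also have "\<dots> = (1 + s) / (c + ?p)" using d by (simp add: power2_eq_square)
  also have "\<dots> \<le> (1 + s) / c" using assms p d
    by (intro divide_left_mono) (auto intro!: mult_pos_pos add_pos_nonneg)
  finally show ?thesis .
qed

lemma h_lip_pos:
  fixes c s x y :: real assumes "c > 0" "s > 0" "0 \<le> x" "x \<le> y"
  shows "\<bar>y / (c + y powr s) - x / (c + x powr s)\<bar> \<le> (1 + s) / c * (y - x)"
proof (cases "x = 0")
  case True
  have "y / (c + y powr s) \<le> y / c" using assms
    by (intro divide_left_mono) (auto intro!: mult_pos_pos add_pos_nonneg)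
  moreover have "y / c \<le> (1 + s) / c * y" using assms by (simp add: field_simps)
  moreover have "y / (c + y powr s) \<ge> 0" using assms by (simp add: add_pos_nonneg less_imp_le)
  moreover have "x / (c + x powr s) = 0" using True by simp
  ultimately show ?thesis using True by (smt (verit))
next
  case False
  show ?thesis
  proof (cases "x = y")
    case True then show ?thesis by simp
  next
    case False2: False
    have xy: "x < y" "x > 0" using assms False False2 by auto
    obtain z where z: "x < z" "z < y" and eq:
      "y / (c + y powr s) - x / (c + x powr s) = (y - x) * (((c + z powr s) - s * z powr s) / (c + z powr s)^2)"
      using MVT2[OF xy(1), of "\<lambda>z. z / (c + z powr s)" "\<lambda>z. ((c + z powr s) - s * z powr s) / (c + z powr s)^2"]
        h_deriv[OF assms(1)] xy by force
    have "\<bar>((c + z powr s) - s * z powr s) / (c + z powr s)^2\<bar> \<le> (1 + s) / c"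
      using h_deriv_bound[OF assms(1) _ assms(2), of z] z xy by simp
    then have a: "(y - x) * \<bar>((c + z powr s) - s * z powr s) / (c + z powr s)^2\<bar> \<le> (y - x) * ((1 + s) / c)"
      using xy by (intro mult_left_mono) auto
    have b: "\<bar>(y - x) * (((c + z powr s) - s * z powr s) / (c + z powr s)^2)\<bar>
       = (y - x) * \<bar>((c + z powr s) - s * z powr s) / (c + z powr s)^2\<bar>"
      using xy by (simp only: abs_mult)
    have "\<bar>(y - x) * (((c + z powr s) - s * z powr s) / (c + z powr s)^2)\<bar> \<le> (y - x) * ((1 + s) / c)"
      using b a by (rule ord_eq_le_trans)
    then show ?thesis unfolding eq by (metis mult.commute)
  qed
qed

definition hh :: "real \<Rightarrow> real \<Rightarrow> real \<Rightarrow> real" where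
  "hh c s q = q / (c + \<bar>q\<bar> powr s)"

lemma hh_bound: assumes "c > 0" shows "\<bar>hh c s q\<bar> \<le> \<bar>q\<bar> / c"
proof -
  have "\<bar>hh c s q\<bar> = \<bar>q\<bar> / (c + \<bar>q\<bar> powr s)"
    using assms by (simp add: hh_def abs_div add_pos_nonneg less_imp_le)
  also have "\<dots> \<le> \<bar>q\<bar> / c" using assms by (intro divide_left_mono) (auto intro!: mult_pos_pos add_pos_nonneg)
  finally show ?thesis .
qed

lemma hh_lip_nonneg:
  assumes "c > 0" "s > 0" "0 \<le> x" "0 \<le> y"
  shows "\<bar>hh c s x - hh c s y\<bar> \<le> (1 + s) / c * \<bar>x - y\<bar>"
proof (cases "x \<le> y")
  case True then show ?thesis using h_lip_pos[OF assms(1,2,3) True] assms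
    by (simp add: hh_def abs_minus_commute)
next
  case False then show ?thesis using h_lip_pos[OF assms(1,2,4), of x] assms
    by (simp add: hh_def)
qed

lemma hh_odd: "hh c s (-q) = - hh c s q" by (simp add: hh_def)

lemma hh_lip:
  assumes "c > 0" "s > 0"
  shows "\<bar>hh c s x - hh c s y\<bar> \<le> (1 + s) / c * \<bar>x - y\<bar>"
proof -
  have K: "1 / c \<le> (1 + s) / c" using assms by (simp add: divide_right_mono)
  consider "0 \<le> x" "0 \<le> y" | "x \<le> 0" "y \<le> 0" | "0 \<le> x" "y \<le> 0" | "x \<le> 0" "0 \<le> y" by linarith
  then show ?thesis
  proof cases
    case 1 then show ?thesis using hh_lip_nonneg[OF assms] by simp
  next
    case 2 then show ?thesis using hh_lip_nonneg[OF assms, of "-x" "-y"]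
      by (simp add: hh_odd abs_minus_commute)
  next
    case 3
    have "\<bar>hh c s x - hh c s y\<bar> \<le> \<bar>x\<bar> / c + \<bar>y\<bar> / c"
      using hh_bound[OF assms(1), of s x] hh_bound[OF assms(1), of s y] by linarith
    also have "\<dots> = 1 / c * \<bar>x - y\<bar>" using 3 by (simp add: add_divide_distrib diff_divide_distrib)
    also have "\<dots> \<le> (1 + s) / c * \<bar>x - y\<bar>" using K by (intro mult_right_mono) auto
    finally show ?thesis .
  next
    case 4
    have "\<bar>hh c s x - hh c s y\<bar> \<le> \<bar>x\<bar> / c + \<bar>y\<bar> / c"
      using hh_bound[OF assms(1), of s x] hh_bound[OF assms(1), of s y] by linarith
    also have "\<dots> = 1 / c * \<bar>x - y\<bar>" using 4 by (simp add: add_divide_distrib diff_divide_distrib)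
    also have "\<dots> \<le> (1 + s) / c * \<bar>x - y\<bar>" using K by (intro mult_right_mono) auto
    finally show ?thesis .
  qed
qed



lemma barrier:
  fixes Q D :: "real \<Rightarrow> real" and \<tau> M t :: real
  assumes tau: "\<tau> > 0" and cont: "continuous_on {-\<tau>..} Q"
   and init: "\<And>t. t \<in> {-\<tau>..0} \<Longrightarrow> 0 \<le> Q t \<and> Q t \<le> M"
   and der: "\<And>t. t > 0 \<Longrightarrow> (Q has_real_derivative D t) (at t)"
   and lo: "\<And>t. t > 0 \<Longrightarrow> 0 \<le> Q (t-\<tau>) \<Longrightarrow> Q (t-\<tau>) \<le> M \<Longrightarrow> Q t < 0 \<Longrightarrow> D t > 0"
   and hi: "\<And>t. t > 0 \<Longrightarrow> 0 \<le> Q (t-\<tau>) \<Longrightarrow> Q (t-\<tau>) \<le> M \<Longrightarrow> Q t > M \<Longrightarrow> D t < 0"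
   and t: "t \<ge> -\<tau>"
  shows "0 \<le> Q t \<and> Q t \<le> M"
proof -
  have step: "\<forall>t\<in>{-\<tau>..real n*\<tau>}. 0 \<le> Q t \<and> Q t \<le> M" for n
  proof (induction n)
    case 0 then show ?case using init by simp
  next
    case (Suc n)
    let ?a = "real n * \<tau>"
    have a0: "?a \<ge> 0" using tau by simp
    show ?case
    proof
      fix t1 assume t1: "t1 \<in> {-\<tau>..real (Suc n)*\<tau>}"
      show "0 \<le> Q t1 \<and> Q t1 \<le> M"
      proof (cases "t1 \<le> ?a")
        case True then show ?thesis using Suc.IH t1 by auto
      next
        case False
        hence t1a: "?a < t1" "t1 \<le> ?a + \<tau>" using t1 by (auto simp: algebra_simps)
        have csub: "continuous_on {?a..t1} Q"
          by (rule continuous_on_subset[OF cont]) (use a0 tau in \<open>auto intro: order_trans[of _ 0]\<close>)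
        have "?a \<in> {-\<tau>..?a}" using a0 tau by (simp del: of_nat_0_le_iff mult_nonneg_nonneg)
        hence Qa: "0 \<le> Q ?a \<and> Q ?a \<le> M" using Suc.IH by blast
        have delay: "0 \<le> Q (\<xi> - \<tau>) \<and> Q (\<xi> - \<tau>) \<le> M" if "\<xi> \<in> {?a..t1}" for \<xi>
        proof -
          have "\<xi> - \<tau> \<in> {-\<tau>..?a}" using that t1a a0 by (simp only: atLeastAtMost_iff) linarith
          then show ?thesis using Suc.IH by blast
        qed
        have "0 \<le> Q t1"
        proof (rule ccontr)
          assume neg: "\<not> 0 \<le> Q t1"
          obtain \<xi> where \<xi>: "\<xi> \<in> {?a..t1}" and mn: "\<forall>y\<in>{?a..t1}. Q \<xi> \<le> Q y"
            using continuous_attains_inf[OF compact_Icc _ csub] t1a by auto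
          have "t1 \<in> {?a..t1}" using t1a by auto
          hence "Q \<xi> \<le> Q t1" using mn by blast
          hence "Q \<xi> < 0" using neg by linarith
          hence "\<xi> \<noteq> ?a" using Qa by auto
          hence xa: "\<xi> > ?a" using \<xi> by auto
          have "D \<xi> > 0" using lo[of \<xi>] delay[OF \<xi>] \<open>Q \<xi> < 0\<close> xa a0 by auto
          then obtain d where d: "d > 0" "\<forall>h>0. h < d \<longrightarrow> Q (\<xi> - h) < Q \<xi>"
            using DERIV_pos_inc_left[OF der] xa a0 by (metis le_less_trans)
          define h where "h = min (d/2) ((\<xi> - ?a)/2)"
          have "h > 0" "h < d" using d xa by (auto simp: h_def)
          hence "Q (\<xi> - h) < Q \<xi>" using d by auto
          moreover have "\<xi> - h \<in> {?a..t1}" using \<xi> xa \<open>h > 0\<close> min.cobounded2[of "d/2" "(\<xi> - ?a)/2"] unfolding h_def[symmetric] by auto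
          ultimately show False using mn by fastforce
        qed
        moreover have "Q t1 \<le> M"
        proof (rule ccontr)
          assume neg: "\<not> Q t1 \<le> M"
          obtain \<xi> where \<xi>: "\<xi> \<in> {?a..t1}" and mx: "\<forall>y\<in>{?a..t1}. Q y \<le> Q \<xi>"
            using continuous_attains_sup[OF compact_Icc _ csub] t1a by auto
          have "t1 \<in> {?a..t1}" using t1a by auto
          hence "Q t1 \<le> Q \<xi>" using mx by blast
          hence "Q \<xi> > M" using neg by linarith
          hence "\<xi> \<noteq> ?a" using Qa by auto
          hence xa: "\<xi> > ?a" using \<xi> by auto
          have "D \<xi> < 0" using hi[of \<xi>] delay[OF \<xi>] \<open>Q \<xi> > M\<close> xa a0 by auto
          then obtain d where d: "d > 0" "\<forall>h>0. h < d \<longrightarrow> Q \<xi> < Q (\<xi> - h)"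
            using DERIV_neg_dec_left[OF der] xa a0 by (metis le_less_trans)
          define h where "h = min (d/2) ((\<xi> - ?a)/2)"
          have "h > 0" "h < d" using d xa by (auto simp: h_def)
          hence "Q \<xi> < Q (\<xi> - h)" using d by auto
          moreover have "\<xi> - h \<in> {?a..t1}" using \<xi> xa \<open>h > 0\<close> min.cobounded2[of "d/2" "(\<xi> - ?a)/2"] unfolding h_def[symmetric] by auto
          ultimately show False using mx by fastforce
        qed
        ultimately show ?thesis by simp
      qed
    qed
  qed
  obtain n where n: "t / \<tau> \<le> real n" using real_arch_simple by blast
  hence "t \<le> real n * \<tau>" using tau by (simp add: divide_le_eq)
  then show ?thesis using step[of n] t by auto
qed



lemma uniq_generic:
  fixes Q1 Q2 F G :: "real \<Rightarrow> real" and \<tau> L t :: real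
  assumes tau: "\<tau> > 0" and L: "L \<ge> 0"
   and lipF: "\<And>x y. \<bar>F x - F y\<bar> \<le> L * \<bar>x - y\<bar>"
   and c1: "continuous_on {-\<tau>..} Q1" and c2: "continuous_on {-\<tau>..} Q2"
   and init: "\<And>t. t \<in> {-\<tau>..0} \<Longrightarrow> Q1 t = Q2 t"
   and d1: "\<And>t. t > 0 \<Longrightarrow> (Q1 has_real_derivative (- F (Q1 t) + G (Q1 (t - \<tau>)))) (at t)"
   and d2: "\<And>t. t > 0 \<Longrightarrow> (Q2 has_real_derivative (- F (Q2 t) + G (Q2 (t - \<tau>)))) (at t)"
   and t: "t \<ge> -\<tau>"
  shows "Q1 t = Q2 t"
proof -
  have step: "\<forall>t\<in>{-\<tau>..real n*\<tau>}. Q1 t = Q2 t" for n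
  proof (induction n)
    case 0 then show ?case using init by simp
  next
    case (Suc n)
    let ?a = "real n * \<tau>"
    have a0: "?a \<ge> 0" using tau by simp
    show ?case
    proof
      fix t1 assume t1: "t1 \<in> {-\<tau>..real (Suc n)*\<tau>}"
      show "Q1 t1 = Q2 t1"
      proof (cases "t1 \<le> ?a")
        case True then show ?thesis using Suc.IH t1 by auto
      next
        case False
        hence t1a: "?a < t1" "t1 \<le> ?a + \<tau>" using t1 by (auto simp: algebra_simps)
        have sub: "{?a..t1} \<subseteq> {-\<tau>..}" using a0 tau by (auto intro: order_trans[of _ 0])
        define e where "e x = exp (-(2*L)*x) * (Q1 x - Q2 x)^2" for x
        have ce: "continuous_on {?a..t1} e" unfolding e_def
          using continuous_on_subset[OF c1 sub] continuous_on_subset[OF c2 sub]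
          by (intro continuous_intros) auto
        have "?a \<in> {-\<tau>..?a}" using a0 tau by (simp del: of_nat_0_le_iff mult_nonneg_nonneg)
        hence ea: "e ?a = 0" using Suc.IH unfolding e_def by auto
        have "e t1 \<le> e ?a"
        proof (rule DERIV_nonpos_imp_decreasing_open[OF _ _ ce])
          show "?a \<le> t1" using t1a by simp
        next
          fix x assume x: "?a < x" "x < t1"
          have xpos: "x > 0" using x a0 by linarith
          have "x - \<tau> \<in> {-\<tau>..?a}" using x t1a xpos by (simp only: atLeastAtMost_iff) auto
          hence eqd: "Q1 (x - \<tau>) = Q2 (x - \<tau>)" using Suc.IH by blast
          let ?d = "Q1 x - Q2 x"
          let ?D = "- F (Q1 x) + G (Q1 (x - \<tau>)) - (- F (Q2 x) + G (Q2 (x - \<tau>)))"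
          have D: "((\<lambda>x. Q1 x - Q2 x) has_real_derivative ?D) (at x)"
            using d1[OF xpos] d2[OF xpos] by (rule DERIV_diff)
          have De: "(e has_real_derivative
              (exp (-(2*L)*x) * (-(2*L)) * ?d^2 + exp (-(2*L)*x) * (2 * ?d * ?D))) (at x)"
            unfolding e_def
            by (auto intro!: derivative_eq_intros d1[OF xpos] d2[OF xpos] simp: algebra_simps)
          have "?D = - (F (Q1 x) - F (Q2 x))" using eqd by simp
          hence "?d * ?D = - (?d * (F (Q1 x) - F (Q2 x)))" by (simp add: algebra_simps)
          hence "?d * ?D \<le> \<bar>?d * (F (Q1 x) - F (Q2 x))\<bar>" by (metis abs_ge_minus_self)
          hence "?d * ?D \<le> \<bar>?d\<bar> * \<bar>F (Q1 x) - F (Q2 x)\<bar>" by (simp only: abs_mult)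
          also have "\<dots> \<le> \<bar>?d\<bar> * (L * \<bar>?d\<bar>)" by (intro mult_left_mono lipF) auto
          also have "\<dots> = L * ?d^2" by (simp add: power2_eq_square)
          finally have X: "?d * ?D \<le> L * ?d^2" .
          have "2 * ?d * ?D - 2 * L * ?d^2 \<le> 0" using X by (simp only: mult.assoc)
          hence "exp (-(2*L)*x) * (2 * ?d * ?D - 2 * L * ?d^2) \<le> 0"
            by (simp add: mult_nonneg_nonpos)
          hence "exp (-(2*L)*x) * (-(2*L)) * ?d^2 + exp (-(2*L)*x) * (2 * ?d * ?D) \<le> 0"
            by (simp add: algebra_simps)
          then show "\<exists>y. (e has_real_derivative y) (at x) \<and> y \<le> 0" using De by blast
        qed
        hence "e t1 \<le> 0" using ea by simp
        moreover have "e t1 \<ge> 0" unfolding e_def by simp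
        ultimately have "e t1 = 0" by simp
        then show ?thesis unfolding e_def by simp
      qed
    qed
  qed
  obtain n where n: "t / \<tau> \<le> real n" using real_arch_simple by blast
  hence "t \<le> real n * \<tau>" using tau by (simp add: divide_le_eq)
  then show ?thesis using step[of n] t by auto
qed



lemma cont_UNIV_from_Icc:
  fixes f :: "real \<Rightarrow> real"
  assumes "\<And>b. b > 0 \<Longrightarrow> continuous_on {-b..b} f"
  shows "continuous_on UNIV f"
proof -
  have "isCont f x" for x
  proof -
    let ?b = "\<bar>x\<bar> + 1"
    have "x \<in> interior {-?b..?b}" by auto
    then show ?thesis using continuous_on_interior[OF assms[of ?b]] by auto
  qed
  then show ?thesis by (simp add: continuous_on_eq_continuous_at)
qed

lemma int_cont:
  fixes g :: "real \<Rightarrow> real"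
  assumes "continuous_on UNIV g"
  shows "continuous_on UNIV (\<lambda>t. integral {0..max t 0} g)"
proof (rule cont_UNIV_from_Icc)
  fix b :: real assume b: "b > 0"
  have "continuous_on {0..b} (\<lambda>x. integral {0..x} g)"
    by (rule indefinite_integral_continuous_1)
       (rule integrable_continuous_real, rule continuous_on_subset[OF assms], simp)
  moreover have "continuous_on {-b..b} (\<lambda>t. max t 0)" by (intro continuous_intros)
  moreover have "(\<lambda>t. max t 0) ` {-b..b} \<subseteq> {0..b}" using b by auto
  ultimately show "continuous_on {-b..b} (\<lambda>t. integral {0..max t 0} g)"
    using continuous_on_compose2 by blast
qed

lemma lip_cont:
  fixes F :: "real \<Rightarrow> real"
  assumes "L \<ge> 0" "\<And>x y. \<bar>F x - F y\<bar> \<le> L * \<bar>x - y\<bar>"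
  shows "continuous_on S F"
proof -
  have "L-lipschitz_on S F" using assms by (intro lipschitz_onI) (auto simp: dist_real_def)
  then show ?thesis by (rule lipschitz_on_continuous_on)
qed

lemma exp_integral:
  fixes a T :: real assumes "a > 0" "T \<ge> 0"
  shows "integral {0..T} (\<lambda>s. exp (a * s)) = (exp (a * T) - 1) / a"
proof -
  have "((\<lambda>s. exp (a * s)) has_integral (exp (a * T) / a - exp (a * 0) / a)) {0..T}"
  proof (rule fundamental_theorem_of_calculus)
    show "0 \<le> T" using assms by simp
    fix x assume "x \<in> {0..T}"
    have "((\<lambda>s. exp (a * s) / a) has_real_derivative exp (a * x)) (at x)"
      using assms by (auto intro!: derivative_eq_intros)
    then show "((\<lambda>s. exp (a * s) / a) has_vector_derivative exp (a * x)) (at x within {0..T})"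
      by (simp add: has_real_derivative_iff_has_vector_derivative has_vector_derivative_at_within)
  qed
  then show ?thesis by (simp add: integral_unique diff_divide_distrib)
qed

lemma est:
  fixes F G Q1 Q2 :: "real \<Rightarrow> real" and L \<tau> D t :: real
  assumes L: "L > 0" and tau: "\<tau> > 0"
    and lipF: "\<And>x y. \<bar>F x - F y\<bar> \<le> L * \<bar>x - y\<bar>"
    and lipG: "\<And>x y. \<bar>G x - G y\<bar> \<le> L * \<bar>x - y\<bar>"
    and c1: "continuous_on UNIV Q1" and c2: "continuous_on UNIV Q2"
    and bd: "\<And>s. \<bar>Q1 s - Q2 s\<bar> \<le> exp (4*L * max s 0) * D"
  shows "\<bar>integral {0..max t 0} (\<lambda>s. - F (Q1 s) + G (Q1 (s - \<tau>)))
         - integral {0..max t 0} (\<lambda>s. - F (Q2 s) + G (Q2 (s - \<tau>)))\<bar>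
         \<le> exp (4*L * max t 0) * D / 2"
proof -
  let ?T = "max t 0"
  let ?g1 = "\<lambda>s. - F (Q1 s) + G (Q1 (s - \<tau>))"
  let ?g2 = "\<lambda>s. - F (Q2 s) + G (Q2 (s - \<tau>))"
  have D0: "D \<ge> 0" using bd[of 0] by simp
  have cF: "continuous_on UNIV F" and cG: "continuous_on UNIV G"
    using lip_cont[of L F] lip_cont[of L G] L lipF lipG by auto
  have cs: "continuous_on UNIV (\<lambda>s. s - \<tau>)" by (intro continuous_intros)
  have a: "continuous_on UNIV (\<lambda>s. F (Q1 s))" using continuous_on_compose2[OF cF c1] by simp
  have b: "continuous_on UNIV (\<lambda>s. Q1 (s - \<tau>))" using continuous_on_compose2[OF c1 cs] by simp
  have c: "continuous_on UNIV (\<lambda>s. G (Q1 (s - \<tau>)))" using continuous_on_compose2[OF cG b] by simp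
  have cg1: "continuous_on UNIV ?g1" using a c by (intro continuous_on_add continuous_on_minus)
  have i1: "?g1 integrable_on {0..?T}" by (rule integrable_continuous_real, rule continuous_on_subset[OF cg1]) auto
  have a: "continuous_on UNIV (\<lambda>s. F (Q2 s))" using continuous_on_compose2[OF cF c2] by simp
  have b: "continuous_on UNIV (\<lambda>s. Q2 (s - \<tau>))" using continuous_on_compose2[OF c2 cs] by simp
  have c: "continuous_on UNIV (\<lambda>s. G (Q2 (s - \<tau>)))" using continuous_on_compose2[OF cG b] by simp
  have cg2: "continuous_on UNIV ?g2" using a c by (intro continuous_on_add continuous_on_minus)
  have i2: "?g2 integrable_on {0..?T}" by (rule integrable_continuous_real, rule continuous_on_subset[OF cg2]) auto
  have ie: "(\<lambda>s. 2 * L * D * exp (4*L * s)) integrable_on {0..?T}"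
    by (intro integrable_continuous_real continuous_intros)
  have pw: "norm (?g1 s - ?g2 s) \<le> 2 * L * D * exp (4*L * s)" if s: "s \<in> {0..?T}" for s
  proof -
    have w1: "exp (4*L * max s 0) = exp (4*L * s)" using s by simp
    have w2: "exp (4*L * max (s - \<tau>) 0) \<le> exp (4*L * s)" using s L tau by simp
    have "\<bar>?g1 s - ?g2 s\<bar> \<le> \<bar>F (Q1 s) - F (Q2 s)\<bar> + \<bar>G (Q1 (s - \<tau>)) - G (Q2 (s - \<tau>))\<bar>"
      by linarith
    also have "\<dots> \<le> L * \<bar>Q1 s - Q2 s\<bar> + L * \<bar>Q1 (s - \<tau>) - Q2 (s - \<tau>)\<bar>"
      using lipF lipG by (intro add_mono) auto
    also have "\<dots> \<le> L * (exp (4*L * s) * D) + L * (exp (4*L * s) * D)"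
    proof -
      have "exp (4*L * max (s - \<tau>) 0) * D \<le> exp (4*L * s) * D" using w2 D0 by (rule mult_right_mono)
      hence "\<bar>Q1 (s - \<tau>) - Q2 (s - \<tau>)\<bar> \<le> exp (4*L * s) * D" using bd[of "s - \<tau>"] by linarith
      moreover have "\<bar>Q1 s - Q2 s\<bar> \<le> exp (4*L * s) * D" using bd[of s] w1 by simp
      ultimately show ?thesis using L by (intro add_mono mult_left_mono) auto
    qed
    also have "\<dots> = 2 * L * D * exp (4*L * s)" by simp
    finally show ?thesis by simp
  qed
  have "\<bar>integral {0..?T} ?g1 - integral {0..?T} ?g2\<bar> = norm (integral {0..?T} (\<lambda>s. ?g1 s - ?g2 s))"
    using integral_diff[OF i1 i2] by simp
  also have "\<dots> \<le> integral {0..?T} (\<lambda>s. 2 * L * D * exp (4*L * s))"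
    by (rule integral_norm_bound_integral[OF integrable_diff[OF i1 i2] ie pw])
  also have "\<dots> = 2 * L * D * integral {0..?T} (\<lambda>s. exp (4*L * s))" by simp
  also have "\<dots> = 2 * L * D * ((exp (4*L * ?T) - 1) / (4*L))"
    using exp_integral[of "4*L" ?T] L by simp
  also have "\<dots> \<le> exp (4*L * ?T) * D / 2"
    using L D0 by (simp add: field_simps)
  finally show ?thesis .
qed

lemma g_cont:
  fixes F G Q :: "real \<Rightarrow> real"
  assumes cF: "continuous_on UNIV F" and cG: "continuous_on UNIV G" and c1: "continuous_on UNIV Q"
  shows "continuous_on UNIV (\<lambda>s. - F (Q s) + G (Q (s - \<tau>)))"
proof -
  have cs: "continuous_on UNIV (\<lambda>s. s - \<tau>)" by (intro continuous_intros)
  have a: "continuous_on UNIV (\<lambda>s. F (Q s))" using continuous_on_compose2[OF cF c1] by simp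
  have b: "continuous_on UNIV (\<lambda>s. Q (s - \<tau>))" using continuous_on_compose2[OF c1 cs] by simp
  have c: "continuous_on UNIV (\<lambda>s. G (Q (s - \<tau>)))" using continuous_on_compose2[OF cG b] by simp
  show ?thesis using a c by (intro continuous_on_add continuous_on_minus)
qed

lemma exist_generic:
  fixes F G \<phi> :: "real \<Rightarrow> real" and L \<tau> :: real
  assumes L: "L > 0" and tau: "\<tau> > 0"
    and lipF: "\<And>x y. \<bar>F x - F y\<bar> \<le> L * \<bar>x - y\<bar>"
    and lipG: "\<And>x y. \<bar>G x - G y\<bar> \<le> L * \<bar>x - y\<bar>"
    and F0: "F 0 = 0" and G0: "G 0 = 0"
    and cphi: "continuous_on {-\<tau>..0} \<phi>"
  shows "\<exists>Q. continuous_on UNIV Q \<and> (\<forall>t\<in>{-\<tau>..0}. Q t = \<phi> t) \<and>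
     (\<forall>t>0. (Q has_real_derivative (- F (Q t) + G (Q (t - \<tau>)))) (at t))"
proof -
  define w where "w t = exp (4*L * max t 0)" for t
  define cl where "cl t = max (-\<tau>) (min t 0)" for t
  define I where "I Q t = integral {0..max t 0} (\<lambda>s. - F (Q s) + G (Q (s - \<tau>)))"
    for Q :: "real \<Rightarrow> real" and t
  define P where "P Q t = \<phi> (cl t) + I Q t" for Q t
  define Qu where "Qu u s = w s * apply_bcontfun u s" for u :: "real \<Rightarrow>\<^sub>C real" and s
  define Psi where "Psi u = Bcontfun (\<lambda>t. P (Qu u) t / w t)" for u
  have wpos: "w t > 0" for t unfolding w_def by simp
  have w1: "w t \<ge> 1" for t unfolding w_def using L by simp
  have cw: "continuous_on UNIV w" unfolding w_def by (intro continuous_intros)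
  have cF: "continuous_on UNIV F" and cG: "continuous_on UNIV G"
    using lip_cont[of L F] lip_cont[of L G] L lipF lipG by auto
  have clr: "cl t \<in> {-\<tau>..0}" for t using tau unfolding cl_def by auto
  have ccl: "continuous_on UNIV cl" unfolding cl_def by (intro continuous_intros)
  have cphicl: "continuous_on UNIV (\<lambda>t. \<phi> (cl t))"
    using continuous_on_compose2[OF cphi ccl] clr by blast
  have "bounded (\<phi> ` {-\<tau>..0})" by (intro compact_imp_bounded compact_continuous_image cphi compact_Icc)
  then obtain B where B: "\<forall>x\<in>\<phi> ` {-\<tau>..0}. norm x \<le> B" by (auto simp: bounded_iff)
  have Bt: "\<bar>\<phi> (cl t)\<bar> \<le> B" for t using B clr by auto
  have B0: "B \<ge> 0" using Bt[of 0] by linarith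
  have cQu: "continuous_on UNIV (Qu u)" for u unfolding Qu_def
    by (intro continuous_intros cw) auto
  have cI: "continuous_on UNIV (I Q)" if "continuous_on UNIV Q" for Q
    unfolding I_def by (rule int_cont, rule g_cont[OF cF cG that])
  have cP: "continuous_on UNIV (P Q)" if "continuous_on UNIV Q" for Q
    unfolding P_def using cphicl cI[OF that] by (intro continuous_on_add)
  have I0: "I (\<lambda>s. 0) t = 0" for t unfolding I_def using F0 G0 by simp
  have estI: "\<bar>I (Qu u1) t - I (Qu u2) t\<bar> \<le> w t * dist u1 u2 / 2" for u1 u2 t
  proof -
    have "\<bar>Qu u1 s - Qu u2 s\<bar> \<le> exp (4*L * max s 0) * dist u1 u2" for s
    proof -
      have "\<bar>Qu u1 s - Qu u2 s\<bar> = w s * dist (apply_bcontfun u1 s) (apply_bcontfun u2 s)"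
        unfolding Qu_def dist_real_def using wpos[of s]
        by (simp add: abs_mult right_diff_distrib[symmetric])
      also have "\<dots> \<le> w s * dist u1 u2" using wpos[of s] dist_bounded by (intro mult_left_mono) auto
      finally show ?thesis unfolding w_def .
    qed
    from est[OF L tau lipF lipG cQu cQu this] show ?thesis unfolding I_def w_def by simp
  qed
  have mem: "(\<lambda>t. P (Qu u) t / w t) \<in> bcontfun" for u
  proof (rule bcontfun_normI)
    show "continuous_on UNIV (\<lambda>t. P (Qu u) t / w t)"
      using cP[OF cQu] cw by (intro continuous_on_divide) (auto simp: w_def)
  next
    fix t
    have "Qu 0 = (\<lambda>s. 0)" unfolding Qu_def by (simp add: fun_eq_iff)
    hence "\<bar>I (Qu u) t\<bar> \<le> w t * dist u 0 / 2" using estI[where ?u1.0=u and ?u2.0=0 and ?t=t] I0 by simp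
    hence "\<bar>P (Qu u) t\<bar> \<le> B + w t * (dist u 0 / 2)" unfolding P_def using Bt[of t] by simp
    also have "\<dots> \<le> w t * B + w t * (dist u 0 / 2)"
      using w1[of t] B0 by (intro add_mono) (auto intro: mult_right_mono[of 1 _ B, simplified])
    finally have "\<bar>P (Qu u) t\<bar> / w t \<le> B + dist u 0 / 2"
      using wpos[of t] by (simp add: divide_le_eq algebra_simps)
    then show "norm (P (Qu u) t / w t) \<le> B + dist u 0 / 2"
      using wpos[of t] by (simp add: abs_div)
  qed
  have app: "apply_bcontfun (Psi u) = (\<lambda>t. P (Qu u) t / w t)" for u
    unfolding Psi_def using mem by (rule Bcontfun_inverse)
  have contr: "dist (Psi u1) (Psi u2) \<le> 1/2 * dist u1 u2" for u1 u2
  proof (rule dist_bound)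
    fix t
    have "dist (Psi u1 t) (Psi u2 t) = \<bar>I (Qu u1) t - I (Qu u2) t\<bar> / w t"
      unfolding app P_def dist_real_def using wpos[of t]
      by (simp add: abs_div diff_divide_distrib[symmetric])
    also have "\<dots> \<le> (w t * dist u1 u2 / 2) / w t"
      using estI[where ?u1.0=u1 and ?u2.0=u2 and ?t=t] wpos[of t] by (intro divide_right_mono) auto
    also have "\<dots> = 1/2 * dist u1 u2" using wpos[of t] by simp
    finally show "dist (Psi u1 t) (Psi u2 t) \<le> 1/2 * dist u1 u2" .
  qed
  obtain u where fx: "Psi u = u" using banach_fix_type[of "1/2" Psi] contr by auto
  define Q where "Q = Qu u"
  have QP: "Q t = P Q t" for t
  proof -
    have "apply_bcontfun u t = P (Qu u) t / w t" using app[of u] fx by (metis)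
    then show ?thesis unfolding Q_def using wpos[of t] by (simp add: Qu_def)
  qed
  have cQ: "continuous_on UNIV Q" unfolding Q_def by (rule cQu)
  have init: "\<forall>t\<in>{-\<tau>..0}. Q t = \<phi> t"
  proof
    fix t assume t: "t \<in> {-\<tau>..0}"
    have "cl t = t" "max t 0 = 0" using t unfolding cl_def by auto
    then show "Q t = \<phi> t" by (subst QP) (simp add: P_def I_def)
  qed
  have der: "\<forall>t>0. (Q has_real_derivative (- F (Q t) + G (Q (t - \<tau>)))) (at t)"
  proof (intro allI impI)
    fix t :: real assume t: "t > 0"
    let ?g = "\<lambda>s. - F (Q s) + G (Q (s - \<tau>))"
    have cg: "continuous_on {0..t+1} ?g" by (rule continuous_on_subset[OF g_cont[OF cF cG cQ]]) auto
    have "((\<lambda>x. integral {0..x} ?g) has_real_derivative ?g t) (at t within {0..t+1})"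
      using integral_has_real_derivative[OF cg] t by auto
    hence "((\<lambda>x. integral {0..x} ?g) has_real_derivative ?g t) (at t)"
      using at_within_Icc_at[of 0 t "t+1"] t by simp
    hence d: "((\<lambda>x. \<phi> 0 + integral {0..x} ?g) has_real_derivative ?g t) (at t)"
      by (auto intro!: derivative_eq_intros)
    show "(Q has_real_derivative ?g t) (at t)"
    proof (rule has_field_derivative_transform_within_open[OF d, of "{0<..}"])
      fix x :: real assume "x \<in> {0<..}"
      hence "cl x = 0" "max x 0 = x" unfolding cl_def using tau by auto
      then show "\<phi> 0 + integral {0..x} ?g = Q x" by (subst QP) (simp add: P_def I_def)
    qed (use t in auto)
  qed
  show ?thesis using cQ init der by blast
qed



lemma hb_bounds:
  assumes "f > 0" "\<theta> > 0"
  shows "0 \<le> hill_beta f \<theta> s q" "hill_beta f \<theta> s q \<le> f"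
proof -
  have c: "\<theta> powr s > 0" using assms by simp
  have d: "\<theta> powr s + \<bar>q\<bar> powr s > 0" using c by (simp add: add_pos_nonneg)
  have le1: "\<theta> powr s / (\<theta> powr s + \<bar>q\<bar> powr s) \<le> 1" using c d by simp
  have ge0: "\<theta> powr s / (\<theta> powr s + \<bar>q\<bar> powr s) \<ge> 0" using c d by simp
  have "f * (\<theta> powr s / (\<theta> powr s + \<bar>q\<bar> powr s)) \<le> f * 1"
    using le1 assms by (intro mult_left_mono) auto
  then show "hill_beta f \<theta> s q \<le> f" unfolding hill_beta_def by simp
  show "0 \<le> hill_beta f \<theta> s q" unfolding hill_beta_def using ge0 assms by simp
qed

lemma G_bound:
  fixes \<kappa> a f \<theta> s :: real
  assumes "\<kappa> > 0" "a > 0" "f > 0" "\<theta> > 0" "s > 0"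
  shows "\<exists>M0>0. \<forall>M\<ge>M0. \<forall>q\<in>{0..M}. a * hill_beta f \<theta> s q * q \<le> \<kappa> * M"
proof -
  define c where "c = \<theta> powr s"
  have c: "c > 0" using assms by (simp add: c_def)
  define R where "R = (2*a*f*c/\<kappa>) powr (1/s)"
  have R: "R > 0" using assms c by (simp add: R_def)
  have Rs: "R powr s = 2*a*f*c/\<kappa>" unfolding R_def using assms c by (simp add: powr_powr)
  define M0 where "M0 = max R (2*a*f*R/\<kappa>)"
  have "M0 > 0" using R by (simp add: M0_def)
  moreover have "a * hill_beta f \<theta> s q * q \<le> \<kappa> * M" if M: "M \<ge> M0" and q: "q \<in> {0..M}" for M q
  proof (cases "q \<le> R")
    case True
    have "a * hill_beta f \<theta> s q * q \<le> a * f * R"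
      using hb_bounds[of f \<theta> s q] assms q True
      by (intro mult_mono) (auto intro: mult_left_mono)
    also have "\<dots> \<le> \<kappa> * M"
    proof -
      have "2*a*f*R/\<kappa> \<le> M" using M by (simp add: M0_def)
      hence "2*(a*f*R) \<le> M*\<kappa>" using assms by (simp add: pos_divide_le_eq mult.assoc)
      moreover have "a*f*R \<ge> 0" using assms R by simp
      ultimately have "a*f*R \<le> M*\<kappa>" by linarith
      thus ?thesis by (simp add: mult.commute)
    qed
    finally show ?thesis .
  next
    case False
    hence qR: "q > R" by simp
    have qs: "q powr s \<ge> R powr s" using qR R assms by (intro powr_mono2) auto
    have hq: "hill_beta f \<theta> s q = f * c / (c + q powr s)"
      using qR R unfolding hill_beta_def c_def by simp
    have "f * c / (c + q powr s) \<le> f * c / (R powr s)"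
      using qs c assms R by (intro divide_left_mono) (auto intro!: mult_pos_pos add_pos_nonneg)
    also have "\<dots> = \<kappa> / (2 * a)" unfolding Rs using assms c by (simp add: field_simps)
    finally have "a * hill_beta f \<theta> s q \<le> a * (\<kappa> / (2 * a))" using hq assms
      by (intro mult_left_mono) auto
    also have "\<dots> = \<kappa> / 2" using assms by simp
    finally have "a * hill_beta f \<theta> s q * q \<le> \<kappa> / 2 * q" using qR R by (intro mult_right_mono) auto
    also have "\<dots> \<le> \<kappa> * M" using q assms by (simp add: mult_left_mono)
    finally show ?thesis .
  qed
  ultimately show ?thesis by blast
qed


theorem theorem1:
  fixes \<kappa> \<gamma> \<tau> \<theta> f s :: real and \<phi> :: "real \<Rightarrow> real"
  assumes "\<kappa> > 0" "\<gamma> > 0" "\<tau> > 0" "\<theta> > 0" "f > 0" "s > 0"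
    and "continuous_on {-\<tau>..0} \<phi>"
    and "\<forall>t\<in>{-\<tau>..0}. \<phi> t \<ge> 0"
  shows "(\<exists>Q. is_solution \<kappa> \<gamma> \<tau> \<theta> f s \<phi> Q \<and>
              (\<exists>M. \<forall>t\<ge>0. 0 \<le> Q t \<and> Q t \<le> M))
         \<and> (\<forall>Q1 Q2. is_solution \<kappa> \<gamma> \<tau> \<theta> f s \<phi> Q1 \<and> is_solution \<kappa> \<gamma> \<tau> \<theta> f s \<phi> Q2
              \<longrightarrow> (\<forall>t\<ge>-\<tau>. Q1 t = Q2 t))"
proof -
  note pos = assms(1-6)
  define c where "c = \<theta> powr s"
  have c: "c > 0" using pos by (simp add: c_def)
  define a where "a = amp \<gamma> \<tau>"
  have a: "a > 0" by (simp add: a_def amp_def)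
  define F where "F q = (\<kappa> + hill_beta f \<theta> s q) * q" for q
  define G where "G q = a * hill_beta f \<theta> s q * q" for q
  define L where "L = \<kappa> + f * (1 + s) + a * f * (1 + s)"
  have L: "L > 0" using pos a by (simp add: L_def add_pos_pos)
  have hbq: "hill_beta f \<theta> s q * q = f * c * hh c s q" for q
  proof -
    have "c + \<bar>q\<bar> powr s > 0" using c by (simp add: add_pos_nonneg)
    then show ?thesis unfolding hill_beta_def hh_def c_def[symmetric] by (simp add: field_simps)
  qed
  have Fe: "F q = \<kappa> * q + f * c * hh c s q" for q unfolding F_def using hbq[of q] by (simp add: algebra_simps)
  have Ge: "G q = a * (f * c * hh c s q)" for q unfolding G_def using hbq[of q] by (simp add: algebra_simps)
  have hl: "f * c * \<bar>hh c s x - hh c s y\<bar> \<le> f * (1 + s) * \<bar>x - y\<bar>" for x y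
  proof -
    have "f * c * \<bar>hh c s x - hh c s y\<bar> \<le> f * c * ((1 + s) / c * \<bar>x - y\<bar>)"
      using hh_lip[OF c pos(6)] pos c by (intro mult_left_mono) auto
    also have "\<dots> = f * (1 + s) * \<bar>x - y\<bar>" using c by simp
    finally show ?thesis .
  qed
  have lipF: "\<bar>F x - F y\<bar> \<le> L * \<bar>x - y\<bar>" for x y
  proof -
    have "\<bar>F x - F y\<bar> = \<bar>\<kappa> * (x - y) + f * c * (hh c s x - hh c s y)\<bar>"
      unfolding Fe by (simp add: algebra_simps)
    also have "\<dots> \<le> \<kappa> * \<bar>x - y\<bar> + f * c * \<bar>hh c s x - hh c s y\<bar>"
      using pos c by (simp add: abs_mult abs_triangle_ineq order_trans[OF abs_triangle_ineq])
    also have "\<dots> \<le> \<kappa> * \<bar>x - y\<bar> + f * (1 + s) * \<bar>x - y\<bar>" using hl by simp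
    also have "\<dots> \<le> L * \<bar>x - y\<bar>" unfolding L_def using a pos
      by (simp add: algebra_simps)
    finally show ?thesis .
  qed
  have lipG: "\<bar>G x - G y\<bar> \<le> L * \<bar>x - y\<bar>" for x y
  proof -
    have "\<bar>G x - G y\<bar> = a * (f * c * \<bar>hh c s x - hh c s y\<bar>)"
      unfolding Ge using a pos c by (simp add: abs_mult right_diff_distrib[symmetric])
    also have "\<dots> \<le> a * (f * (1 + s) * \<bar>x - y\<bar>)" using hl a by (intro mult_left_mono) auto
    also have "\<dots> \<le> L * \<bar>x - y\<bar>" unfolding L_def using a pos
      by (simp add: algebra_simps)
    finally show ?thesis .
  qed
  have F0: "F 0 = 0" and G0: "G 0 = 0" by (simp_all add: F_def G_def)
  have deq: "- (\<kappa> + hill_beta f \<theta> s (Q t)) * Q t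
           + amp \<gamma> \<tau> * hill_beta f \<theta> s (Q (t - \<tau>)) * Q (t - \<tau>)
        = - F (Q t) + G (Q (t - \<tau>))" for Q :: "real \<Rightarrow> real" and t
    by (simp add: F_def G_def a_def algebra_simps)
  have sol_iff: "is_solution \<kappa> \<gamma> \<tau> \<theta> f s \<phi> Q \<longleftrightarrow>
      continuous_on {-\<tau>..} Q \<and> (\<forall>t\<in>{-\<tau>..0}. Q t = \<phi> t) \<and>
      (\<forall>t>0. (Q has_real_derivative (- F (Q t) + G (Q (t - \<tau>)))) (at t))" for Q
    unfolding is_solution_def deq ..
  obtain Q where cQ: "continuous_on UNIV Q" and iQ: "\<forall>t\<in>{-\<tau>..0}. Q t = \<phi> t"
    and dQ: "\<forall>t>0. (Q has_real_derivative (- F (Q t) + G (Q (t - \<tau>)))) (at t)"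
    using exist_generic[OF L pos(3) lipF lipG F0 G0 assms(7)] by blast
  have solQ: "is_solution \<kappa> \<gamma> \<tau> \<theta> f s \<phi> Q"
    unfolding sol_iff using cQ iQ dQ continuous_on_subset by blast
  obtain M0 where M0: "M0 > 0" "\<forall>M\<ge>M0. \<forall>q\<in>{0..M}. a * hill_beta f \<theta> s q * q \<le> \<kappa> * M"
    using G_bound[OF pos(1) a pos(5) pos(4) pos(6)] by blast
  have "bounded (\<phi> ` {-\<tau>..0})" by (intro compact_imp_bounded compact_continuous_image assms(7) compact_Icc)
  then obtain B where B: "\<forall>x\<in>\<phi> ` {-\<tau>..0}. norm x \<le> B" by (auto simp: bounded_iff)
  define M where "M = max M0 B"
  have GM: "G q \<le> \<kappa> * M" if "0 \<le> q" "q \<le> M" for q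
    using M0(2) that unfolding G_def M_def by auto
  have M0le: "0 \<le> M" using M0 by (simp add: M_def)
  have bnd: "0 \<le> Q t \<and> Q t \<le> M" if t: "t \<ge> -\<tau>" for t
  proof (rule barrier[OF pos(3) continuous_on_subset[OF cQ] _ _ _ _ t])
    show "{-\<tau>..} \<subseteq> UNIV" by simp
  next
    fix t assume "t \<in> {-\<tau>..0}"
    then show "0 \<le> Q t \<and> Q t \<le> M" using iQ assms(8) B unfolding M_def by force
  next
    fix t :: real assume "t > 0"
    then show "(Q has_real_derivative (- F (Q t) + G (Q (t - \<tau>)))) (at t)" using dQ by blast
  next
    fix t :: real assume h: "0 \<le> Q (t - \<tau>)" "Q (t - \<tau>) \<le> M" "Q t < 0"
    have hb: "0 \<le> hill_beta f \<theta> s (Q t)" "0 \<le> hill_beta f \<theta> s (Q (t - \<tau>))"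
      using hb_bounds pos by auto
    have "(\<kappa> + hill_beta f \<theta> s (Q t)) * Q t < 0"
      using h hb pos by (intro mult_pos_neg) auto
    moreover have "G (Q (t - \<tau>)) \<ge> 0" unfolding G_def using a hb h by simp
    ultimately show "- F (Q t) + G (Q (t - \<tau>)) > 0" unfolding F_def by linarith
  next
    fix t :: real assume h: "0 \<le> Q (t - \<tau>)" "Q (t - \<tau>) \<le> M" "Q t > M"
    have hb: "0 \<le> hill_beta f \<theta> s (Q t)" using hb_bounds pos by auto
    have "\<kappa> * Q t \<le> (\<kappa> + hill_beta f \<theta> s (Q t)) * Q t"
      using hb h M0le by (intro mult_right_mono) auto
    moreover have "\<kappa> * M < \<kappa> * Q t" using h pos by simp
    moreover have "G (Q (t - \<tau>)) \<le> \<kappa> * M" using GM h by simp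
    ultimately show "- F (Q t) + G (Q (t - \<tau>)) < 0" unfolding F_def by linarith
  qed
  have part1: "\<exists>Q. is_solution \<kappa> \<gamma> \<tau> \<theta> f s \<phi> Q \<and> (\<exists>M. \<forall>t\<ge>0. 0 \<le> Q t \<and> Q t \<le> M)"
    using solQ bnd pos(3) by (intro exI[of _ Q] conjI exI[of _ M]) auto
  have part2: "\<forall>t\<ge>-\<tau>. Q1 t = Q2 t"
    if "is_solution \<kappa> \<gamma> \<tau> \<theta> f s \<phi> Q1" "is_solution \<kappa> \<gamma> \<tau> \<theta> f s \<phi> Q2" for Q1 Q2
  proof (intro allI impI)
    fix t :: real assume t: "t \<ge> -\<tau>"
    from that have s1: "continuous_on {-\<tau>..} Q1" "\<forall>t\<in>{-\<tau>..0}. Q1 t = \<phi> t"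
        "\<forall>t>0. (Q1 has_real_derivative (- F (Q1 t) + G (Q1 (t - \<tau>)))) (at t)"
      and s2: "continuous_on {-\<tau>..} Q2" "\<forall>t\<in>{-\<tau>..0}. Q2 t = \<phi> t"
        "\<forall>t>0. (Q2 has_real_derivative (- F (Q2 t) + G (Q2 (t - \<tau>)))) (at t)"
      unfolding sol_iff by auto
    show "Q1 t = Q2 t"
      by (rule uniq_generic[OF pos(3) less_imp_le[OF L] lipF s1(1) s2(1) _ _ _ t])
         (use s1 s2 in auto)
  qed
  show ?thesis using part1 part2 by blast
qed

end
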